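(* Let $\mathcal{G}=\{G_1,\dots,G_M\}$ be groups with $G_i\subseteq[p]$ and $\bigcup_i G_i=[p]$. Let $\vec g\in\mathbb{R}^p$, let $\tilde k$ and $k$ be positive integers, let $\hat{\vec u}$ be the output of the Greedy Projection algorithm applied to $\vec g$ with target group sparsity $\tilde k$, and let $\vec u_*=P_k^{\mathcal{G}}(\vec g)$. Then \[ \|\hat{\vec u}-\vec g\|_2^2\le e^{-\tilde k/k}\,\|\vec g_{\operatorname{supp}(\vec u_* )}\|_2^2+\|\vec u_*-\vec g\|_2^2 , \] where $e$ is the base of the natural logarithm.
   Context: For $\vec w\in\mathbb{R}^p$ and $S\subseteq[p]$, $\vec w_S$ is the vector that agrees with $\vec w$ on $S$ and is $0$ outside $S$. The group-$\ell_0$ pseudo-norm $\|\vec w\|_0^{\mathcal{G}}$ is the minimum, over all decompositions $\vec w=\sum_{i=1}^M \vec a_{G_i}$ with $\operatorname{supp}(\vec a_{G_i})\subseteq G_i$, of the number of indices $i$ with $\vec a_{G_i}\neq 0$. The exact projection is $P_k^{\mathcal{G}}(\vec g)=\arg\min_{\vec w}\|\vec w-\vec g\|_2^2$ subject to $\|\vec w\|_0^{\mathcal{G}}\le k$. The Greedy Projection algorithm with input $\vec g$ and parameter $\tilde k$: set $\vec u=0$, $\vec v=\vec g$, $\widehat{\mathcal{G}}=\emptyset$; for $t=1,\dots,\tilde k$: choose $G^\star=\arg\max_{G\in\mathcal{G}\setminus\widehat{\mathcal{G}}}\|\vec v_G\|_2$, set $\widehat{\mathcal{G}}=\widehat{\mathcal{G}}\cup\{G^\star\}$,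 $\vec u=\vec u+\vec v_{G^\star}$, $\vec v=\vec v-\vec v_{G^\star}$; output $\hat{\vec u}=\vec u$ (so $\hat{\vec u}$ equals $\vec g$ on the union of the selected groups and $0$ elsewhere). *)

theory Defs
  imports "HOL-Analysis.Analysis"
begin

text \<open>Coordinates are indexed by a finite type 'n (playing the role of [p]);
  vectors are elements of real^'n, whose norm is the Euclidean 2-norm.\<close>

definition restr :: "'n set \<Rightarrow> real^'n \<Rightarrow> real^'n" where
  "restr S w = (\<chi> i. if i \<in> S then w $ i else 0)"

definition vsupp :: "real^'n \<Rightarrow> 'n set" where
  "vsupp w = {i. w $ i \<noteq> 0}"

definition group_l0 :: "'n set set \<Rightarrow> real^'n \<Rightarrow> nat" where
  "group_l0 \<G> w = (LEAST n. \<exists>a :: 'n set \<Rightarrow> real^'n.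
      (\<forall>G\<in>\<G>. vsupp (a G) \<subseteq> G) \<and> w = (\<Sum>G\<in>\<G>. a G)
      \<and> card {G\<in>\<G>. a G \<noteq> 0} = n)"

definition is_group_proj :: "'n set set \<Rightarrow> nat \<Rightarrow> real^'n \<Rightarrow> real^'n \<Rightarrow> bool" where
  "is_group_proj \<G> k g u \<longleftrightarrow> group_l0 \<G> u \<le> k \<and>
     (\<forall>w. group_l0 \<G> w \<le> k \<longrightarrow> (norm (u - g))\<^sup>2 \<le> (norm (w - g))\<^sup>2)"

definition greedy_resid :: "real^'n \<Rightarrow> 'n set list \<Rightarrow> real^'n" where
  "greedy_resid g Ss = restr (- \<Union>(set Ss)) g"

text \<open>Ss is a valid run (sequence of selected groups, in order) of Greedy Projection
  with kt iterations, for any tie-breaking rule in the arg max.\<close>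
definition greedy_run :: "'n set set \<Rightarrow> real^'n \<Rightarrow> nat \<Rightarrow> 'n set list \<Rightarrow> bool" where
  "greedy_run \<G> g kt Ss \<longleftrightarrow> length Ss = kt \<and>
     (\<forall>t < kt. Ss ! t \<in> \<G> - set (take t Ss) \<and>
        (\<forall>H \<in> \<G> - set (take t Ss).
           norm (restr H (greedy_resid g (take t Ss)))
             \<le> norm (restr (Ss ! t) (greedy_resid g (take t Ss)))))"

definition greedy_output :: "real^'n \<Rightarrow> 'n set list \<Rightarrow> real^'n" where
  "greedy_output g Ss = restr (\<Union>(set Ss)) g"

end

theory Submission imports Defs begin

lemma norm_sq: "(norm (x::real^'n::finite))\<^sup>2 = (\<Sum>i\<in>UNIV. (x$i)\<^sup>2)"
  by (simp add: norm_vec_def L2_set_def sum_nonneg)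

lemma norm_restr: "(norm (restr S (g::real^'n::finite)))\<^sup>2 = (\<Sum>i\<in>S. (g$i)\<^sup>2)"
proof -
  have "(norm (restr S g))\<^sup>2 = (\<Sum>i\<in>UNIV. if i \<in> S then (g$i)\<^sup>2 else 0)"
    unfolding norm_sq restr_def by (intro sum.cong) auto
  also have "\<dots> = (\<Sum>i\<in>S. (g$i)\<^sup>2)" by (simp add: sum.If_cases)
  finally show ?thesis .
qed

lemma restr_restr: "restr H (restr X g) = restr (H \<inter> X) g"
  by (simp add: restr_def vec_eq_iff)

lemma norm_out: "(norm (greedy_output g Ss - (g::real^'n::finite)))\<^sup>2 = (\<Sum>i\<in>- \<Union>(set Ss). (g$i)\<^sup>2)"
proof -
  have "(norm (greedy_output g Ss - g))\<^sup>2 = (norm (restr (- \<Union>(set Ss)) g))\<^sup>2"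
    unfolding norm_sq greedy_output_def restr_def by (intro sum.cong) auto
  then show ?thesis by (simp add: norm_restr)
qed

lemma union_bound:
  fixes f :: "'n::finite \<Rightarrow> real"
  assumes "finite A" "\<And>i. f i \<ge> 0"
  shows "(\<Sum>i\<in>\<Union>A - U. f i) \<le> (\<Sum>G\<in>A. \<Sum>i\<in>G - U. f i)"
  using assms(1)
proof (induction A rule: finite_induct)
  case empty then show ?case by simp
next
  case (insert G A)
  have "(\<Sum>i\<in>\<Union>(insert G A) - U. f i) = (\<Sum>i\<in>(G - U) \<union> (\<Union>A - U). f i)"
    by (intro sum.cong) auto
  also have "\<dots> \<le> (\<Sum>i\<in>G - U. f i) + (\<Sum>i\<in>\<Union>A - U. f i)"
    by (simp add: sum_Un sum_nonneg assms(2))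
  also have "\<dots> \<le> (\<Sum>i\<in>G - U. f i) + (\<Sum>G\<in>A. \<Sum>i\<in>G - U. f i)"
    using insert.IH by simp
  finally show ?case using insert by simp
qed

lemma pow_exp: assumes "k > 0" shows "(1 - 1 / real k) ^ kt \<le> exp (- real kt / real k)"
proof -
  have "(1 - 1 / real k) ^ kt \<le> exp (- 1 / real k) ^ kt"
    apply (rule power_mono)
    using exp_ge_add_one_self[of "- 1 / real k"] assms by (auto simp: field_simps)
  also have "\<dots> = exp (- real kt / real k)"
    by (simp add: exp_of_nat_mult[symmetric])
  finally show ?thesis .
qed

lemma greedy_bound:
  fixes g :: "real^'n::finite"
  assumes run: "greedy_run \<G> g kt Ss" and AG: "A \<subseteq> \<G>" and cA: "card A \<le> k" and k: "k > 0"
  shows "t \<le> kt \<Longrightarrow> (\<Sum>i\<in>-\<Union>(set (take t Ss)). (g$i)\<^sup>2) - (\<Sum>i\<in>-\<Union>A. (g$i)\<^sup>2)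
          \<le> (1 - 1 / real k) ^ t * (\<Sum>i\<in>\<Union>A. (g$i)\<^sup>2)"
proof (induction t)
  case 0
  have "(\<Sum>i\<in>UNIV. (g$i)\<^sup>2) = (\<Sum>i\<in>UNIV \<inter> \<Union>A. (g$i)\<^sup>2) + (\<Sum>i\<in>UNIV - \<Union>A. (g$i)\<^sup>2)"
    by (rule sum.Int_Diff) simp
  then show ?case by (simp add: Compl_eq_Diff_UNIV)
next
  case (Suc t)
  define sq where "sq = (\<lambda>S. \<Sum>i\<in>S. (g$i)\<^sup>2)"
  define U where "U = \<Union>(set (take t Ss))"
  define T where "T = \<Union>A"
  define S where "S = Ss ! t"
  have sqnn: "sq X \<ge> 0" for X unfolding sq_def by (simp add: sum_nonneg)
  have split: "sq X = sq (X \<inter> Y) + sq (X - Y)" for X Y unfolding sq_def by (rule sum.Int_Diff) simp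
  have tl: "t < kt" "t < length Ss" using Suc.prems run by (auto simp: greedy_run_def)
  have U': "\<Union>(set (take (Suc t) Ss)) = U \<union> S"
    using tl by (auto simp: take_Suc_conv_app_nth U_def S_def)
  have IH: "sq (-U) - sq (-T) \<le> (1 - 1 / real k) ^ t * sq T"
    using Suc by (simp add: sq_def U_def T_def)
  define m where "m = sq (S - U)"
  have step: "sq (- (U \<union> S)) = sq (-U) - m"
    using split[of "-U" S] unfolding m_def by (simp add: Diff_eq Int_commute inf_left_commute)
  have gr: "S \<in> \<G> - set (take t Ss)" "\<forall>H \<in> \<G> - set (take t Ss).
           norm (restr H (greedy_resid g (take t Ss))) \<le> norm (restr S (greedy_resid g (take t Ss)))"
    using run tl unfolding greedy_run_def S_def by auto
  have nr: "(norm (restr H (greedy_resid g (take t Ss))))\<^sup>2 = sq (H - U)" for H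
    unfolding greedy_resid_def restr_restr norm_restr sq_def U_def by (simp add: Diff_eq)
  have Gm: "sq (G - U) \<le> m" if "G \<in> A" for G
  proof (cases "G \<in> set (take t Ss)")
    case True
    then have "G - U = {}" unfolding U_def by auto
    then have "sq (G - U) = 0" unfolding sq_def by (metis sum.empty) then show ?thesis using sqnn[of "S - U"] by (simp add: m_def)
  next
    case False
    then have "G \<in> \<G> - set (take t Ss)" using that AG by auto
    then have "norm (restr G (greedy_resid g (take t Ss))) \<le> norm (restr S (greedy_resid g (take t Ss)))"
      using gr by auto
    then have "(norm (restr G (greedy_resid g (take t Ss))))\<^sup>2 \<le> (norm (restr S (greedy_resid g (take t Ss))))\<^sup>2"
      by (rule power_mono) simp
    then show ?thesis by (simp add: nr m_def)
  qed
  have "finite A" by (rule finite_subset[OF AG]) simp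
  have "sq (T - U) \<le> (\<Sum>G\<in>A. sq (G - U))"
    unfolding sq_def T_def by (rule union_bound[OF \<open>finite A\<close>]) simp
  also have "\<dots> \<le> (\<Sum>G\<in>A. m)" by (rule sum_mono) (rule Gm)
  also have "\<dots> = real (card A) * m" by simp
  also have "\<dots> \<le> real k * m" using cA sqnn[of "S-U"] by (simp add: m_def mult_right_mono)
  finally have Tm: "sq (T - U) \<le> real k * m" .
  have "sq (-U) = sq (-U \<inter> T) + sq (-U - T)" by (rule split)
  moreover have "sq (-U - T) \<le> sq (-T)" unfolding sq_def
    by (rule sum_mono2) auto
  moreover have "-U \<inter> T = T - U" by auto
  ultimately have DT: "sq (-U) - sq (-T) \<le> sq (T - U)" by simp
  have mk: "(sq (-U) - sq (-T)) / real k \<le> m" using DT Tm k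
    by (simp add: divide_le_eq mult.commute)
  have q0: "0 \<le> 1 - 1 / real k" using k by (simp add: field_simps)
  have "sq (- (U \<union> S)) - sq (-T) \<le> (1 - 1 / real k) ^ Suc t * sq T"
  proof (cases "sq (-U) - sq (-T) \<le> 0")
    case True
    have "0 \<le> (1 - 1 / real k) ^ Suc t * sq T" using q0 sqnn by simp
    then show ?thesis using True step sqnn[of "S-U"] by (simp add: m_def)
  next
    case False
    have "sq (- (U \<union> S)) - sq (-T) \<le> (sq (-U) - sq (-T)) - (sq (-U) - sq (-T)) / real k"
      using step mk by simp
    also have "\<dots> = (1 - 1 / real k) * (sq (-U) - sq (-T))" by (simp add: algebra_simps diff_divide_distrib)
    also have "\<dots> \<le> (1 - 1 / real k) * ((1 - 1 / real k) ^ t * sq T)"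
      by (rule mult_left_mono[OF IH q0])
    finally show ?thesis by simp
  qed
  then show ?case unfolding U' by (simp add: sq_def T_def)
qed

lemma decomp:
  fixes w :: "real^'n::finite"
  assumes "vsupp w \<subseteq> \<Union>A" "A \<subseteq> \<G>"
  shows "\<exists>a :: 'n set \<Rightarrow> real^'n. (\<forall>G\<in>\<G>. vsupp (a G) \<subseteq> G) \<and> w = (\<Sum>G\<in>\<G>. a G)
      \<and> {G\<in>\<G>. a G \<noteq> 0} \<subseteq> A"
proof -
  define f where "f i = (SOME G. G \<in> A \<and> i \<in> G)" for i
  have f: "i \<in> \<Union>A \<Longrightarrow> f i \<in> A \<and> i \<in> f i" for i
    unfolding f_def by (rule someI_ex) auto
  define a where "a G = (\<chi> i. if i \<in> \<Union>A \<and> f i = G then w$i else 0)" for G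
  have 1: "\<forall>G\<in>\<G>. vsupp (a G) \<subseteq> G"
    using f by (auto simp: a_def vsupp_def split: if_splits)
  have "(\<Sum>G\<in>\<G>. a G) $ i = w $ i" for i
  proof (cases "i \<in> \<Union>A")
    case True
    then have "f i \<in> \<G>" using f assms(2) by blast
    then show ?thesis using True by (simp add: sum_component a_def sum.delta')
  next
    case False
    then have "w $ i = 0" using assms(1) by (auto simp: vsupp_def)
    then show ?thesis using False by (simp add: sum_component a_def)
  qed
  then have 2: "w = (\<Sum>G\<in>\<G>. a G)" by (simp add: vec_eq_iff)
  have 3: "{G\<in>\<G>. a G \<noteq> 0} \<subseteq> A"
  proof
    fix G assume "G \<in> {G\<in>\<G>. a G \<noteq> 0}"
    then obtain i where "a G $ i \<noteq> 0" by (auto simp: vec_eq_iff)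
    then have "i \<in> \<Union>A" "f i = G" by (auto simp: a_def split: if_splits)
    then show "G \<in> A" using f by blast
  qed
  show ?thesis using 1 2 3 by blast
qed

theorem lemma1:
  fixes \<G> :: "'n::finite set set" and g u_star :: "real^'n"
    and kt k :: nat and Ss :: "'n set list"
  assumes "finite \<G>"
    and "\<Union>\<G> = UNIV"
    and "kt > 0" and "k > 0"
    and "greedy_run \<G> g kt Ss"
    and "is_group_proj \<G> k g u_star"
  shows "(norm (greedy_output g Ss - g))\<^sup>2
           \<le> exp (- real kt / real k) * (norm (restr (vsupp u_star) g))\<^sup>2
             + (norm (u_star - g))\<^sup>2"
proof -
  define u where "u = u_star"
  define sq where "sq = (\<lambda>S. \<Sum>i\<in>S. (g$i)\<^sup>2)"
  define P where "P = (\<lambda>w n. \<exists>a :: 'n set \<Rightarrow> real^'n.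
      (\<forall>G\<in>\<G>. vsupp (a G) \<subseteq> G) \<and> w = (\<Sum>G\<in>\<G>. a G)
      \<and> card {G\<in>\<G>. a G \<noteq> 0} = n)"
  have gl: "group_l0 \<G> w = (LEAST n. P w n)" for w unfolding group_l0_def P_def by simp
  have proj: "group_l0 \<G> u \<le> k" "\<And>w. group_l0 \<G> w \<le> k \<Longrightarrow> (norm (u - g))\<^sup>2 \<le> (norm (w - g))\<^sup>2"
    using assms(6) unfolding is_group_proj_def u_def by auto
  obtain a0 where "(\<forall>G\<in>\<G>. vsupp (a0 G) \<subseteq> G) \<and> u = (\<Sum>G\<in>\<G>. a0 G)"
    using decomp[of u \<G> \<G>] assms(2) by auto
  then have "P u (card {G\<in>\<G>. a0 G \<noteq> 0})" unfolding P_def by blast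
  then have "P u (group_l0 \<G> u)" unfolding gl by (rule LeastI)
  then obtain a where a: "\<forall>G\<in>\<G>. vsupp (a G) \<subseteq> G" "u = (\<Sum>G\<in>\<G>. a G)"
      "card {G\<in>\<G>. a G \<noteq> 0} = group_l0 \<G> u" unfolding P_def by blast
  define A where "A = {G\<in>\<G>. a G \<noteq> 0}"
  define T where "T = \<Union>A"
  have AG: "A \<subseteq> \<G>" and cA: "card A \<le> k" using a proj by (auto simp: A_def)
  have finA: "finite A" using AG assms(1) finite_subset by blast
  have suppT: "vsupp u \<subseteq> T"
  proof
    fix i assume "i \<in> vsupp u"
    then have "(\<Sum>G\<in>\<G>. a G $ i) \<noteq> 0" using a(2) by (simp add: vsupp_def sum_component)
    then obtain G where G: "G \<in> \<G>" "a G $ i \<noteq> 0" by (meson sum.neutral)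
    then have "a G \<noteq> 0" "i \<in> G" using a(1) by (auto simp: vsupp_def)
    then show "i \<in> T" using G unfolding T_def A_def by blast
  qed
  have "vsupp (restr T g) \<subseteq> \<Union>A" by (auto simp: vsupp_def restr_def T_def)
  then obtain b where b: "(\<forall>G\<in>\<G>. vsupp (b G) \<subseteq> G) \<and> restr T g = (\<Sum>G\<in>\<G>. b G)"
      "{G\<in>\<G>. b G \<noteq> 0} \<subseteq> A" using decomp[of "restr T g" A \<G>] AG by blast
  have "P (restr T g) (card {G\<in>\<G>. b G \<noteq> 0})" unfolding P_def using b by blast
  then have "group_l0 \<G> (restr T g) \<le> card {G\<in>\<G>. b G \<noteq> 0}" unfolding gl by (rule Least_le)
  also have "\<dots> \<le> card A" using b(2) finA by (rule card_mono[rotated])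
  finally have "(norm (u - g))\<^sup>2 \<le> (norm (restr T g - g))\<^sup>2" using cA proj(2) by simp
  also have "(norm (restr T g - g))\<^sup>2 = sq (-T)"
  proof -
    have "(norm (restr T g - g))\<^sup>2 = (norm (restr (-T) g))\<^sup>2"
      unfolding norm_sq restr_def by (intro sum.cong) auto
    then show ?thesis by (simp add: norm_restr sq_def)
  qed
  finally have opt: "(norm (u - g))\<^sup>2 \<le> sq (-T)" .
  have uz: "u $ i = 0" if "i \<notin> T" for i using suppT that by (auto simp: vsupp_def)
  have "(norm (u - g))\<^sup>2 = (\<Sum>i\<in>UNIV. (u$i - g$i)\<^sup>2)" by (simp add: norm_sq)
  also have "\<dots> = (\<Sum>i\<in>UNIV \<inter> T. (u$i - g$i)\<^sup>2) + (\<Sum>i\<in>UNIV - T. (u$i - g$i)\<^sup>2)"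
    by (rule sum.Int_Diff) simp
  also have "(\<Sum>i\<in>UNIV - T. (u$i - g$i)\<^sup>2) = sq (-T)"
    unfolding sq_def Compl_eq_Diff_UNIV by (intro sum.cong) (auto simp: uz)
  finally have eq: "(norm (u - g))\<^sup>2 = (\<Sum>i\<in>T. (u$i - g$i)\<^sup>2) + sq (-T)" by simp
  have "(\<Sum>i\<in>T. (u$i - g$i)\<^sup>2) = 0"
    using eq opt by (simp add: sum_nonneg antisym)
  then have ug: "u $ i = g $ i" if "i \<in> T" for i
    using that by (simp add: sum_nonneg_eq_0_iff)
  have nug: "(norm (u - g))\<^sup>2 = sq (-T)" using eq ug by simp
  have "sq T = sq (vsupp u)" unfolding sq_def
  proof (rule sum.mono_neutral_right)
    show "\<forall>i\<in>T - vsupp u. (g $ i)\<^sup>2 = 0" using ug by (auto simp: vsupp_def)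
  qed (use suppT in auto)
  then have nsupp: "(norm (restr (vsupp u_star) g))\<^sup>2 = sq T"
    by (simp add: norm_restr sq_def u_def)
  have run: "greedy_run \<G> g kt Ss" by fact
  then have len: "length Ss = kt" by (simp add: greedy_run_def)
  have "sq (-\<Union>(set (take kt Ss))) - sq (-T) \<le> (1 - 1 / real k) ^ kt * sq T"
    using greedy_bound[OF run AG cA assms(4), of kt] unfolding sq_def T_def by simp
  then have "sq (-\<Union>(set Ss)) \<le> (1 - 1 / real k) ^ kt * sq T + sq (-T)" using len by simp
  also have "\<dots> \<le> exp (- real kt / real k) * sq T + sq (-T)"
    using pow_exp[OF assms(4), of kt] by (simp add: mult_right_mono sq_def sum_nonneg)
  finally show ?thesis using nsupp nug by (simp add: norm_out sq_def u_def)
qed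

end
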